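(* Let $X=(X_1,\dots,X_d)$ be a non-degenerate $d$-dimensional $1$-Meixner random vector with $E[X_k]=0$ and $E[X_iX_j]=\delta_{i,j}$ for all $i,j,k$, with $[U_i,X_j]=\sum_k\alpha_{i,j,k}X_k+\beta_{i,j}I$, and let $F(\mathbf t):=\sum_{i,j,k}\alpha_{i,j,k}t_it_jt_k$. Then for all $\mathbf t\in\mathbb R^d$, $F(\mathbf t)=\tfrac12E\big[(\mathbf t\cdot X)^3\big]$.
   Context: Let $X_1,\dots,X_d$ be real random variables on $(\Omega,\mathcal F,P)$ with finite moments of all orders. $F$ (as a space) is the space of polynomial random variables $f(X_1,\dots,X_d)$ (complex coefficients), $F_n$ those of degree $\le n$, $G_0=F_0$, $G_n=F_n\ominus F_{n-1}$ in $L^2(P)$. For $f\in G_n$, $X_if\in G_{n-1}\oplus G_n\oplus G_{n+1}$; its components define $a^-(i)f,a^0(i)f,a^+(i)f$ respectively, extended linearly. $U_i:=a^-(i)+\tfrac12a^0(i)$. $(X_1,\dots,X_d)$ is a $d$-dimensional $1$-Meixner random vector if there are reals $\alpha_{i,j,k},\beta_{i,j}$ with $[U_i,X_j]=\sum_k\alpha_{i,j,k}X_k+\beta_{i,j}I$ for all $i,j$ (with $X_j$ the multiplication operator, $I$ the identity); it is non-degenerate if $I,X_1,\dots,X_d$ are linearly independent operators. $\mathbf t\cdot X=\sum_it_iX_i$. *)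

theory Defs
  imports "HOL-Probability.Probability"
begin

text \<open>Random variables X :: 'd \<Rightarrow> 'a \<Rightarrow> real on a probability space M, indexed by a
finite type 'd (so d = CARD('d)). L2 notions are expressed through integrals; operator
identities are required almost everywhere (elements of L2 are a.e.-classes).\<close>

definition monomial_rv :: "('d::finite \<Rightarrow> 'a \<Rightarrow> real) \<Rightarrow> ('d \<Rightarrow> nat) \<Rightarrow> 'a \<Rightarrow> complex" where
  "monomial_rv X m = (\<lambda>\<omega>. complex_of_real (\<Prod>i\<in>UNIV. X i \<omega> ^ m i))"

definition poly_rv_deg :: "('d::finite \<Rightarrow> 'a \<Rightarrow> real) \<Rightarrow> nat \<Rightarrow> ('a \<Rightarrow> complex) set" where
  "poly_rv_deg X n = {f. \<exists>c :: ('d \<Rightarrow> nat) \<Rightarrow> complex.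
      f = (\<lambda>\<omega>. \<Sum>m\<in>{m. sum m UNIV \<le> n}. c m * monomial_rv X m \<omega>)}"

definition poly_rv :: "('d::finite \<Rightarrow> 'a \<Rightarrow> real) \<Rightarrow> ('a \<Rightarrow> complex) set" where
  "poly_rv X = (\<Union>n. poly_rv_deg X n)"

definition poly_rv_degree :: "('d::finite \<Rightarrow> 'a \<Rightarrow> real) \<Rightarrow> ('a \<Rightarrow> complex) \<Rightarrow> nat" where
  "poly_rv_degree X f = (LEAST n. f \<in> poly_rv_deg X n)"

definition L2_inner :: "'a measure \<Rightarrow> ('a \<Rightarrow> complex) \<Rightarrow> ('a \<Rightarrow> complex) \<Rightarrow> complex" where
  "L2_inner M f g = integral\<^sup>L M (\<lambda>\<omega>. f \<omega> * cnj (g \<omega>))"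

definition L2_proj :: "'a measure \<Rightarrow> ('a \<Rightarrow> complex) set \<Rightarrow> ('a \<Rightarrow> complex) \<Rightarrow> 'a \<Rightarrow> complex" where
  "L2_proj M S f = (SOME p. p \<in> S \<and> (\<forall>g\<in>S. L2_inner M (\<lambda>\<omega>. f \<omega> - p \<omega>) g = 0))"

text \<open>Component in G_n = F_n \<ominus> F_(n-1) (G_0 = F_0).\<close>
fun G_comp :: "'a measure \<Rightarrow> ('d::finite \<Rightarrow> 'a \<Rightarrow> real) \<Rightarrow> nat \<Rightarrow> ('a \<Rightarrow> complex) \<Rightarrow> 'a \<Rightarrow> complex" where
  "G_comp M X 0 f = L2_proj M (poly_rv_deg X 0) f"
| "G_comp M X (Suc n) f = (\<lambda>\<omega>. L2_proj M (poly_rv_deg X (Suc n)) f \<omega> - L2_proj M (poly_rv_deg X n) f \<omega>)"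

text \<open>a^-(i) and a^0(i), defined on G_n and extended linearly:
  for f_n \<in> G_n, a^-(i) f_n is the G_(n-1)-component and a^0(i) f_n the G_n-component of X_i f_n.\<close>
definition a_minus :: "'a measure \<Rightarrow> ('d::finite \<Rightarrow> 'a \<Rightarrow> real) \<Rightarrow> 'd \<Rightarrow> ('a \<Rightarrow> complex) \<Rightarrow> 'a \<Rightarrow> complex" where
  "a_minus M X i f = (\<lambda>\<omega>. \<Sum>n\<in>{1..poly_rv_degree X f}.
      G_comp M X (n - 1) (\<lambda>\<eta>. complex_of_real (X i \<eta>) * G_comp M X n f \<eta>) \<omega>)"

definition a_zero :: "'a measure \<Rightarrow> ('d::finite \<Rightarrow> 'a \<Rightarrow> real) \<Rightarrow> 'd \<Rightarrow> ('a \<Rightarrow> complex) \<Rightarrow> 'a \<Rightarrow> complex" where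
  "a_zero M X i f = (\<lambda>\<omega>. \<Sum>n\<in>{0..poly_rv_degree X f}.
      G_comp M X n (\<lambda>\<eta>. complex_of_real (X i \<eta>) * G_comp M X n f \<eta>) \<omega>)"

definition U_op :: "'a measure \<Rightarrow> ('d::finite \<Rightarrow> 'a \<Rightarrow> real) \<Rightarrow> 'd \<Rightarrow> ('a \<Rightarrow> complex) \<Rightarrow> 'a \<Rightarrow> complex" where
  "U_op M X i f = (\<lambda>\<omega>. a_minus M X i f \<omega> + 1/2 * a_zero M X i f \<omega>)"

definition finite_moments :: "'a measure \<Rightarrow> ('d \<Rightarrow> 'a \<Rightarrow> real) \<Rightarrow> bool" where
  "finite_moments M X \<longleftrightarrow> (\<forall>i. X i \<in> borel_measurable M \<and> (\<forall>n::nat. integrable M (\<lambda>\<omega>. \<bar>X i \<omega>\<bar> ^ n)))"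

definition one_Meixner_coeffs :: "'a measure \<Rightarrow> ('d::finite \<Rightarrow> 'a \<Rightarrow> real)
    \<Rightarrow> ('d \<Rightarrow> 'd \<Rightarrow> 'd \<Rightarrow> real) \<Rightarrow> ('d \<Rightarrow> 'd \<Rightarrow> real) \<Rightarrow> bool" where
  "one_Meixner_coeffs M X \<alpha> \<beta> \<longleftrightarrow> (\<forall>i j. \<forall>f\<in>poly_rv X. AE \<omega> in M.
      U_op M X i (\<lambda>\<eta>. complex_of_real (X j \<eta>) * f \<eta>) \<omega> - complex_of_real (X j \<omega>) * U_op M X i f \<omega>
      = (\<Sum>k\<in>UNIV. complex_of_real (\<alpha> i j k) * complex_of_real (X k \<omega>) * f \<omega>)
        + complex_of_real (\<beta> i j) * f \<omega>)"

definition one_Meixner :: "'a measure \<Rightarrow> ('d::finite \<Rightarrow> 'a \<Rightarrow> real) \<Rightarrow> bool" where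
  "one_Meixner M X \<longleftrightarrow> (\<exists>\<alpha> \<beta>. one_Meixner_coeffs M X \<alpha> \<beta>)"

definition non_degenerate :: "'a measure \<Rightarrow> ('d::finite \<Rightarrow> 'a \<Rightarrow> real) \<Rightarrow> bool" where
  "non_degenerate M X \<longleftrightarrow> (\<forall>(c0::complex) (c::'d \<Rightarrow> complex).
      (\<forall>f\<in>poly_rv X. AE \<omega> in M. c0 * f \<omega> + (\<Sum>k\<in>UNIV. c k * complex_of_real (X k \<omega>) * f \<omega>) = 0)
      \<longrightarrow> c0 = 0 \<and> (\<forall>k. c k = 0))"

end

theory Submission
  imports Defs
begin


lemma abc_le: "\<bar>(a::real) * b * c\<bar> \<le> \<bar>a\<bar>^3 + \<bar>b\<bar>^3 + \<bar>c\<bar>^3"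
proof -
  define m where "m = max \<bar>a\<bar> (max \<bar>b\<bar> \<bar>c\<bar>)"
  have "\<bar>a * b * c\<bar> = \<bar>a\<bar> * \<bar>b\<bar> * \<bar>c\<bar>" by (simp add: abs_mult)
  also have "\<dots> \<le> m * m * m"
    by (intro mult_mono) (auto simp: m_def)
  also have "m * m * m = m ^ 3" by (simp add: power3_eq_cube)
  also have "m ^ 3 \<le> \<bar>a\<bar>^3 + \<bar>b\<bar>^3 + \<bar>c\<bar>^3"
    unfolding m_def by (auto simp: max_def)
  finally show ?thesis .
qed

locale mx = prob_space M for M :: "'a measure" +
  fixes X :: "'d::finite \<Rightarrow> 'a \<Rightarrow> real"
  assumes fm: "finite_moments M X"
  and mean0: "\<And>k. integral\<^sup>L M (X k) = 0"
  and cov: "\<And>i j. integral\<^sup>L M (\<lambda>\<omega>. X i \<omega> * X j \<omega>) = (if i = j then 1 else 0)"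
begin

lemma meas[measurable]: "X k \<in> borel_measurable M"
  using fm unfolding finite_moments_def by auto

lemma intpow: "integrable M (\<lambda>\<omega>. \<bar>X i \<omega>\<bar> ^ n)"
  using fm unfolding finite_moments_def by auto

lemma int1: "integrable M (X i)"
proof -
  have "integrable M (\<lambda>\<omega>. \<bar>X i \<omega>\<bar> ^ 1)" by (rule intpow)
  then show ?thesis by (rule Bochner_Integration.integrable_bound) auto
qed

lemma int3: "integrable M (\<lambda>\<omega>. X i \<omega> * X j \<omega> * X k \<omega>)"
proof -
  have "integrable M (\<lambda>\<omega>. \<bar>X i \<omega>\<bar> ^ 3 + \<bar>X j \<omega>\<bar> ^ 3 + \<bar>X k \<omega>\<bar> ^ 3)"
    using intpow by (intro Bochner_Integration.integrable_add) auto
  then show ?thesis by (rule Bochner_Integration.integrable_bound) (auto intro!: abc_le order_trans[OF abc_le])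
qed

lemma int2: "integrable M (\<lambda>\<omega>. X i \<omega> * X j \<omega>)"
proof -
  have "integrable M (\<lambda>\<omega>. \<bar>X i \<omega>\<bar> ^ 2 + \<bar>X j \<omega>\<bar> ^ 2)"
    using intpow[of i 2] intpow[of j 2] by (rule Bochner_Integration.integrable_add)
  then show ?thesis
  proof (rule Bochner_Integration.integrable_bound)
    show "AE x in M. norm (X i x * X j x) \<le> norm (\<bar>X i x\<bar>\<^sup>2 + \<bar>X j x\<bar>\<^sup>2)"
    proof (intro AE_I2)
      fix x
      have "\<bar>X i x * X j x\<bar> \<le> \<bar>X i x\<bar>\<^sup>2 + \<bar>X j x\<bar>\<^sup>2"
      proof -
        have "2 * \<bar>X i x\<bar> * \<bar>X j x\<bar> \<le> \<bar>X i x\<bar>\<^sup>2 + \<bar>X j x\<bar>\<^sup>2" by (rule sum_squares_bound)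
        moreover have "0 \<le> \<bar>X i x\<bar> * \<bar>X j x\<bar>" by simp
        ultimately show ?thesis unfolding abs_mult by linarith
      qed
      then show "norm (X i x * X j x) \<le> norm (\<bar>X i x\<bar>\<^sup>2 + \<bar>X j x\<bar>\<^sup>2)" by simp
    qed
  qed auto
qed

end


definition ee :: "'d \<Rightarrow> 'd \<Rightarrow> nat" where "ee k = (\<lambda>i. if i = k then 1 else 0)"

lemma ee_inj: "inj ee"
  by (rule injI) (metis ee_def zero_neq_one)

lemma ee_nz: "(\<lambda>_. 0) \<notin> range (ee :: 'd \<Rightarrow> 'd \<Rightarrow> nat)"
  unfolding image_iff ee_def fun_eq_iff by (metis zero_neq_one)

lemma set0: "{m::'d::finite \<Rightarrow> nat. sum m UNIV \<le> 0} = {\<lambda>_. 0}"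
  by (auto simp: fun_eq_iff)

lemma set1: "{m::'d::finite \<Rightarrow> nat. sum m UNIV \<le> 1} = insert (\<lambda>_. 0) (range ee)"
proof (rule set_eqI, rule iffI)
  fix m :: "'d \<Rightarrow> nat" assume "m \<in> {m. sum m UNIV \<le> 1}"
  then have s: "sum m UNIV \<le> 1" by simp
  show "m \<in> insert (\<lambda>_. 0) (range ee)"
  proof (cases "\<forall>i. m i = 0")
    case True then show ?thesis by (auto simp: fun_eq_iff)
  next
    case False
    then obtain k where k: "m k \<noteq> 0" by auto
    have split: "sum m UNIV = m k + sum m (UNIV - {k})"
      by (simp add: sum.remove)
    then have "m k = 1" "sum m (UNIV - {k}) = 0" using s k by linarith+
    then have "\<forall>i. i \<noteq> k \<longrightarrow> m i = 0" by auto
    with \<open>m k = 1\<close> have "m = ee k" by (auto simp: ee_def fun_eq_iff)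
    then show ?thesis by auto
  qed
next
  fix m :: "'d \<Rightarrow> nat" assume "m \<in> insert (\<lambda>_. 0) (range ee)"
  then show "m \<in> {m. sum m UNIV \<le> 1}"
    by (auto simp: ee_def)
qed

lemma mono0: "monomial_rv X (\<lambda>_. 0) = (\<lambda>_. 1)"
  by (simp add: monomial_rv_def)

lemma mono_ee: "monomial_rv X (ee k) = (\<lambda>\<omega>. complex_of_real (X k \<omega>))"
proof -
  have "\<And>\<omega>. (\<Prod>i\<in>UNIV. X i \<omega> ^ ee k i) = (\<Prod>i\<in>UNIV. if i = k then X i \<omega> else 1)"
    by (rule prod.cong) (auto simp: ee_def)
  then show ?thesis by (simp add: monomial_rv_def)
qed

lemma F0_iff: "f \<in> poly_rv_deg (X::'d::finite \<Rightarrow> 'a \<Rightarrow> real) 0 \<longleftrightarrow> (\<exists>c. f = (\<lambda>_. c))"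
  unfolding poly_rv_deg_def set0 by (auto simp: mono0)

lemma sum1: "(\<Sum>m\<in>{m. sum m UNIV \<le> 1}. c m * monomial_rv (X::'d::finite \<Rightarrow> 'a \<Rightarrow> real) m \<omega>)
   = c (\<lambda>_. 0) + (\<Sum>k\<in>UNIV. c (ee k) * complex_of_real (X k \<omega>))"
proof -
  have fin: "finite (range (ee::'d \<Rightarrow> 'd \<Rightarrow> nat))" by simp
  show ?thesis
    unfolding set1 sum.insert[OF fin ee_nz] sum.reindex[OF ee_inj]
    by (simp add: mono0 mono_ee)
qed

lemma F1_iff: "f \<in> poly_rv_deg (X::'d::finite \<Rightarrow> 'a \<Rightarrow> real) 1 \<longleftrightarrow>
   (\<exists>c0 c. f = (\<lambda>\<omega>. c0 + (\<Sum>k\<in>UNIV. c k * complex_of_real (X k \<omega>))))"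
proof
  assume "f \<in> poly_rv_deg X 1"
  then obtain c where "f = (\<lambda>\<omega>. \<Sum>m\<in>{m. sum m UNIV \<le> 1}. c m * monomial_rv X m \<omega>)"
    unfolding poly_rv_deg_def by auto
  then have ff: "f = (\<lambda>\<omega>. c (\<lambda>_. 0) + (\<Sum>k\<in>UNIV. c (ee k) * complex_of_real (X k \<omega>)))"
    unfolding sum1 by simp
  show "\<exists>c0 c. f = (\<lambda>\<omega>. c0 + (\<Sum>k\<in>UNIV. c k * complex_of_real (X k \<omega>)))"
  proof (intro exI)
    show "f = (\<lambda>\<omega>. c (\<lambda>_. 0) + (\<Sum>k\<in>UNIV. c (ee k) * complex_of_real (X k \<omega>)))" by (rule ff)
  qed
next
  assume "\<exists>c0 c. f = (\<lambda>\<omega>. c0 + (\<Sum>k\<in>UNIV. c k * complex_of_real (X k \<omega>)))"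
  then obtain c0 c where f: "f = (\<lambda>\<omega>. c0 + (\<Sum>k\<in>UNIV. c k * complex_of_real (X k \<omega>)))" by blast
  define d where "d m = (if m = (\<lambda>_. 0) then c0 else if m \<in> range ee then c (inv ee m) else 0)" for m
  have "d (\<lambda>_. 0) = c0" by (simp add: d_def)
  moreover have "d (ee k) = c k" for k
  proof -
    have "ee k \<noteq> (\<lambda>_. 0)" using ee_nz by (metis rangeI)
    then show ?thesis by (simp add: d_def inv_f_f[OF ee_inj])
  qed
  ultimately have "f = (\<lambda>\<omega>. \<Sum>m\<in>{m. sum m UNIV \<le> 1}. d m * monomial_rv X m \<omega>)"
    unfolding sum1 f by simp
  then show "f \<in> poly_rv_deg X 1" unfolding poly_rv_deg_def by blast
qed



context mx begin

lemma cint1: "integrable M (\<lambda>\<omega>. complex_of_real (X k \<omega>))"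
  using int1 by auto
lemma cint2: "integrable M (\<lambda>\<omega>. complex_of_real (X i \<omega>) * complex_of_real (X j \<omega>))"
proof -
  have e: "(\<lambda>\<omega>. complex_of_real (X i \<omega>) * complex_of_real (X j \<omega>)) = (\<lambda>\<omega>. complex_of_real (X i \<omega> * X j \<omega>))" by simp
  show ?thesis by (subst e) (rule integrable_of_real[OF int2])
qed
lemma cint3: "integrable M (\<lambda>\<omega>. complex_of_real (X i \<omega>) * complex_of_real (X j \<omega>) * complex_of_real (X k \<omega>))"
proof -
  have e: "(\<lambda>\<omega>. complex_of_real (X i \<omega>) * complex_of_real (X j \<omega>) * complex_of_real (X k \<omega>)) = (\<lambda>\<omega>. complex_of_real (X i \<omega> * X j \<omega> * X k \<omega>))" by simp
  show ?thesis by (subst e) (rule integrable_of_real[OF int3])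
qed
lemma cmean: "integral\<^sup>L M (\<lambda>\<omega>. complex_of_real (X k \<omega>)) = 0"
  using mean0 by simp
lemma ccov: "integral\<^sup>L M (\<lambda>\<omega>. complex_of_real (X i \<omega>) * complex_of_real (X j \<omega>)) = (if i = j then 1 else 0)"
proof -
  have e: "(\<lambda>\<omega>. complex_of_real (X i \<omega>) * complex_of_real (X j \<omega>)) = (\<lambda>\<omega>. complex_of_real (X i \<omega> * X j \<omega>))" by simp
  have "integral\<^sup>L M (\<lambda>\<omega>. complex_of_real (X i \<omega> * X j \<omega>)) = complex_of_real (if i = j then 1 else 0)"
    by (simp only: integral_complex_of_real cov)
  then show ?thesis unfolding e by (cases "i = j") auto
qed

lemma lin_int:
  fixes h :: "'a \<Rightarrow> complex"
  assumes h: "integrable M h" and hk: "\<And>k. integrable M (\<lambda>\<omega>. h \<omega> * complex_of_real (X k \<omega>))"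
  shows "integrable M (\<lambda>\<omega>. h \<omega> * (c0 + (\<Sum>k\<in>UNIV. c k * complex_of_real (X k \<omega>))))"
    and "integral\<^sup>L M (\<lambda>\<omega>. h \<omega> * (c0 + (\<Sum>k\<in>UNIV. c k * complex_of_real (X k \<omega>))))
         = c0 * integral\<^sup>L M h + (\<Sum>k\<in>UNIV. c k * integral\<^sup>L M (\<lambda>\<omega>. h \<omega> * complex_of_real (X k \<omega>)))"
proof -
  have eq: "(\<lambda>\<omega>. h \<omega> * (c0 + (\<Sum>k\<in>UNIV. c k * complex_of_real (X k \<omega>))))
     = (\<lambda>\<omega>. c0 * h \<omega> + (\<Sum>k\<in>UNIV. c k * (h \<omega> * complex_of_real (X k \<omega>))))"
    by (auto simp: fun_eq_iff distrib_left sum_distrib_left mult_ac)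
  have i1: "integrable M (\<lambda>\<omega>. c0 * h \<omega>)" using h by auto
  have i2: "integrable M (\<lambda>\<omega>. \<Sum>k\<in>UNIV. c k * (h \<omega> * complex_of_real (X k \<omega>)))"
    using hk by (intro Bochner_Integration.integrable_sum) auto
  show "integrable M (\<lambda>\<omega>. h \<omega> * (c0 + (\<Sum>k\<in>UNIV. c k * complex_of_real (X k \<omega>))))"
    unfolding eq using i1 i2 by (rule Bochner_Integration.integrable_add)
  show "integral\<^sup>L M (\<lambda>\<omega>. h \<omega> * (c0 + (\<Sum>k\<in>UNIV. c k * complex_of_real (X k \<omega>))))
         = c0 * integral\<^sup>L M h + (\<Sum>k\<in>UNIV. c k * integral\<^sup>L M (\<lambda>\<omega>. h \<omega> * complex_of_real (X k \<omega>)))"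
    unfolding eq Bochner_Integration.integral_add[OF i1 i2]
    using hk by (subst Bochner_Integration.integral_sum) auto
qed

lemma cnj_lin: "cnj (c0 + (\<Sum>k\<in>UNIV. c k * complex_of_real (X k \<omega>)))
   = cnj c0 + (\<Sum>k\<in>UNIV. cnj (c k) * complex_of_real (X k \<omega>))"
  by (simp add: cnj_sum)

lemma inner_lin:
  fixes h :: "'a \<Rightarrow> complex"
  assumes h: "integrable M h" and hk: "\<And>k. integrable M (\<lambda>\<omega>. h \<omega> * complex_of_real (X k \<omega>))"
  shows "integrable M (\<lambda>\<omega>. h \<omega> * cnj (c0 + (\<Sum>k\<in>UNIV. c k * complex_of_real (X k \<omega>))))"
    and "L2_inner M h (\<lambda>\<omega>. c0 + (\<Sum>k\<in>UNIV. c k * complex_of_real (X k \<omega>)))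
         = cnj c0 * integral\<^sup>L M h + (\<Sum>k\<in>UNIV. cnj (c k) * integral\<^sup>L M (\<lambda>\<omega>. h \<omega> * complex_of_real (X k \<omega>)))"
  unfolding L2_inner_def cnj_lin using lin_int[OF h hk] by auto

definition good :: "('a \<Rightarrow> complex) \<Rightarrow> bool" where
  "good h \<longleftrightarrow> h \<in> borel_measurable M \<and> integrable M h \<and> (\<forall>k. integrable M (\<lambda>\<omega>. h \<omega> * complex_of_real (X k \<omega>)))"

lemma proj0:
  assumes "integrable M f"
  shows "L2_proj M (poly_rv_deg X 0) f = (\<lambda>_. integral\<^sup>L M f)"
  unfolding L2_proj_def
proof (rule some_equality)
  show "(\<lambda>_. integral\<^sup>L M f) \<in> poly_rv_deg X 0 \<and>
    (\<forall>g\<in>poly_rv_deg X 0. L2_inner M (\<lambda>\<omega>. f \<omega> - integral\<^sup>L M f) g = 0)"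
    using assms by (auto simp: F0_iff L2_inner_def prob_space)
next
  fix p assume p: "p \<in> poly_rv_deg X 0 \<and> (\<forall>g\<in>poly_rv_deg X 0. L2_inner M (\<lambda>\<omega>. f \<omega> - p \<omega>) g = 0)"
  then obtain c where c: "p = (\<lambda>_. c)" by (auto simp: F0_iff)
  have "(\<lambda>_. 1::complex) \<in> poly_rv_deg X 0" by (auto simp: F0_iff)
  with p have "L2_inner M (\<lambda>\<omega>. f \<omega> - p \<omega>) (\<lambda>_. 1) = 0" by blast
  then have "integral\<^sup>L M f - c = 0" using assms by (simp add: c L2_inner_def prob_space)
  then show "p = (\<lambda>_. integral\<^sup>L M f)" by (simp add: c)
qed

end


context mx begin

lemma good_F1form: "good (\<lambda>\<omega>. c0 + (\<Sum>k\<in>UNIV. c k * complex_of_real (X k \<omega>)))"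
proof -
  have m: "(\<lambda>\<omega>. c0 + (\<Sum>k\<in>UNIV. c k * complex_of_real (X k \<omega>))) \<in> borel_measurable M"
    by measurable
  have "integrable M (\<lambda>\<omega>. (\<lambda>_. 1::complex) \<omega> * (c0 + (\<Sum>k\<in>UNIV. c k * complex_of_real (X k \<omega>))))"
    by (rule lin_int(1)) (auto simp: cint1)
  then have i: "integrable M (\<lambda>\<omega>. c0 + (\<Sum>k\<in>UNIV. c k * complex_of_real (X k \<omega>)))" by simp
  have "integrable M (\<lambda>\<omega>. (c0 + (\<Sum>k\<in>UNIV. c k * complex_of_real (X k \<omega>))) * complex_of_real (X l \<omega>))" for l
  proof -
    have "integrable M (\<lambda>\<omega>. complex_of_real (X l \<omega>) * (c0 + (\<Sum>k\<in>UNIV. c k * complex_of_real (X k \<omega>))))"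
      by (rule lin_int(1)) (auto simp: cint1 cint2)
    then show ?thesis by (simp add: mult.commute)
  qed
  with m i show ?thesis unfolding good_def by blast
qed

lemma good_F1: "g \<in> poly_rv_deg X 1 \<Longrightarrow> good g"
  unfolding F1_iff using good_F1form by auto

lemma good_diff: "good h1 \<Longrightarrow> good h2 \<Longrightarrow> good (\<lambda>\<omega>. h1 \<omega> - h2 \<omega>)"
  unfolding good_def by (auto simp: left_diff_distrib)

lemma inner_F1: "good h \<Longrightarrow> g \<in> poly_rv_deg X 1 \<Longrightarrow> integrable M (\<lambda>\<omega>. h \<omega> * cnj (g \<omega>))"
  unfolding F1_iff good_def using inner_lin(1) by auto

lemma proj1:
  assumes gf: "good f"
  shows "L2_proj M (poly_rv_deg X 1) f \<in> poly_rv_deg X 1"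
    and "AE \<omega> in M. L2_proj M (poly_rv_deg X 1) f \<omega>
          = integral\<^sup>L M f + (\<Sum>k\<in>UNIV. integral\<^sup>L M (\<lambda>\<eta>. f \<eta> * complex_of_real (X k \<eta>)) * complex_of_real (X k \<omega>))"
proof -
  define a0 where "a0 = integral\<^sup>L M f"
  define a where "a k = integral\<^sup>L M (\<lambda>\<eta>. f \<eta> * complex_of_real (X k \<eta>))" for k
  define q where "q = (\<lambda>\<omega>. a0 + (\<Sum>k\<in>UNIV. a k * complex_of_real (X k \<omega>)))"
  have q1: "q \<in> poly_rv_deg X 1" unfolding q_def F1_iff by blast
  have fi: "integrable M f" and fk: "\<And>k. integrable M (\<lambda>\<omega>. f \<omega> * complex_of_real (X k \<omega>))"
    using gf by (auto simp: good_def)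
  have gq: "good q" unfolding q_def by (rule good_F1form)
  have qi: "integrable M q" and qk: "\<And>k. integrable M (\<lambda>\<omega>. q \<omega> * complex_of_real (X k \<omega>))"
    using gq by (auto simp: good_def)
  have gfq: "good (\<lambda>\<omega>. f \<omega> - q \<omega>)" using gf gq by (rule good_diff)
  have int_q: "integral\<^sup>L M q = a0"
  proof -
    have "integral\<^sup>L M (\<lambda>\<omega>. (\<lambda>_. 1::complex) \<omega> * (a0 + (\<Sum>k\<in>UNIV. a k * complex_of_real (X k \<omega>))))
      = a0 * integral\<^sup>L M (\<lambda>_. 1::complex) + (\<Sum>k\<in>UNIV. a k * integral\<^sup>L M (\<lambda>\<omega>. (\<lambda>_. 1::complex) \<omega> * complex_of_real (X k \<omega>)))"
      by (rule lin_int(2)) (auto simp: cint1)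
    then show ?thesis by (simp add: q_def mean0 prob_space)
  qed
  have int_qk: "integral\<^sup>L M (\<lambda>\<omega>. q \<omega> * complex_of_real (X l \<omega>)) = a l" for l
  proof -
    have "integral\<^sup>L M (\<lambda>\<omega>. complex_of_real (X l \<omega>) * (a0 + (\<Sum>k\<in>UNIV. a k * complex_of_real (X k \<omega>))))
      = a0 * integral\<^sup>L M (\<lambda>\<omega>. complex_of_real (X l \<omega>)) + (\<Sum>k\<in>UNIV. a k * integral\<^sup>L M (\<lambda>\<omega>. complex_of_real (X l \<omega>) * complex_of_real (X k \<omega>)))"
      by (rule lin_int(2)) (auto simp: cint1 cint2)
    also have "\<dots> = a l" by (simp add: mean0 ccov if_distrib cong: if_cong)
    finally show ?thesis by (simp add: q_def mult.commute)
  qed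
  have orth: "\<forall>g\<in>poly_rv_deg X 1. L2_inner M (\<lambda>\<omega>. f \<omega> - q \<omega>) g = 0"
  proof
    fix g assume "g \<in> poly_rv_deg X 1"
    then obtain c0 c where g: "g = (\<lambda>\<omega>. c0 + (\<Sum>k\<in>UNIV. c k * complex_of_real (X k \<omega>)))"
      unfolding F1_iff by blast
    have h1: "integrable M (\<lambda>\<omega>. f \<omega> - q \<omega>)"
      and hk: "\<And>k. integrable M (\<lambda>\<omega>. (f \<omega> - q \<omega>) * complex_of_real (X k \<omega>))"
      using gfq by (auto simp: good_def)
    have e0: "integral\<^sup>L M (\<lambda>\<omega>. f \<omega> - q \<omega>) = 0"
      using fi qi int_q by (simp add: a0_def)
    have ek: "integral\<^sup>L M (\<lambda>\<omega>. (f \<omega> - q \<omega>) * complex_of_real (X k \<omega>)) = 0" for k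
    proof -
      have "integral\<^sup>L M (\<lambda>\<omega>. (f \<omega> - q \<omega>) * complex_of_real (X k \<omega>))
          = integral\<^sup>L M (\<lambda>\<omega>. f \<omega> * complex_of_real (X k \<omega>) - q \<omega> * complex_of_real (X k \<omega>))"
        by (simp add: left_diff_distrib)
      also have "\<dots> = 0" using fk[of k] qk[of k] int_qk[of k] by (simp add: a_def)
      finally show ?thesis .
    qed
    show "L2_inner M (\<lambda>\<omega>. f \<omega> - q \<omega>) g = 0"
      unfolding g inner_lin(2)[OF h1 hk] e0 ek by simp
  qed
  define P where "P p \<longleftrightarrow> p \<in> poly_rv_deg X 1 \<and> (\<forall>g\<in>poly_rv_deg X 1. L2_inner M (\<lambda>\<omega>. f \<omega> - p \<omega>) g = 0)" for p
  have "P q" using q1 orth by (simp add: P_def)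
  then have Pp: "P (L2_proj M (poly_rv_deg X 1) f)"
    unfolding L2_proj_def P_def[symmetric] by (metis someI)
  define p where "p = L2_proj M (poly_rv_deg X 1) f"
  have p1: "p \<in> poly_rv_deg X 1" and porth: "\<forall>g\<in>poly_rv_deg X 1. L2_inner M (\<lambda>\<omega>. f \<omega> - p \<omega>) g = 0"
    using Pp by (auto simp: P_def p_def)
  then show "L2_proj M (poly_rv_deg X 1) f \<in> poly_rv_deg X 1" by (simp add: p_def)
  define d where "d = (\<lambda>\<omega>. p \<omega> - q \<omega>)"
  have d1: "d \<in> poly_rv_deg X 1"
  proof -
    obtain c0 c where pc: "p = (\<lambda>\<omega>. c0 + (\<Sum>k\<in>UNIV. c k * complex_of_real (X k \<omega>)))"
      using p1 unfolding F1_iff by blast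
    have dd: "d = (\<lambda>\<omega>. (c0 - a0) + (\<Sum>k\<in>UNIV. (c k - a k) * complex_of_real (X k \<omega>)))"
      unfolding d_def pc q_def by (auto simp: fun_eq_iff left_diff_distrib sum_subtractf)
    show ?thesis unfolding F1_iff
    proof (intro exI)
      show "d = (\<lambda>\<omega>. (c0 - a0) + (\<Sum>k\<in>UNIV. (c k - a k) * complex_of_real (X k \<omega>)))" by (rule dd)
    qed
  qed
  have gp: "good p" using p1 by (rule good_F1)
  have gd: "good d" using d1 by (rule good_F1)
  have gfp: "good (\<lambda>\<omega>. f \<omega> - p \<omega>)" using gf gp by (rule good_diff)
  have iA: "integrable M (\<lambda>\<omega>. (f \<omega> - p \<omega>) * cnj (d \<omega>))" using gfp d1 by (rule inner_F1)
  have iB: "integrable M (\<lambda>\<omega>. (f \<omega> - q \<omega>) * cnj (d \<omega>))" using gfq d1 by (rule inner_F1)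
  have iD: "integrable M (\<lambda>\<omega>. d \<omega> * cnj (d \<omega>))" using gd d1 by (rule inner_F1)
  have A: "integral\<^sup>L M (\<lambda>\<omega>. (f \<omega> - p \<omega>) * cnj (d \<omega>)) = 0"
    using porth d1 by (auto simp: L2_inner_def)
  have B: "integral\<^sup>L M (\<lambda>\<omega>. (f \<omega> - q \<omega>) * cnj (d \<omega>)) = 0"
    using orth d1 by (auto simp: L2_inner_def)
  have I0: "integral\<^sup>L M (\<lambda>\<omega>. (f \<omega> - q \<omega>) * cnj (d \<omega>) - (f \<omega> - p \<omega>) * cnj (d \<omega>)) = 0"
    using A B iA iB by simp
  have eq: "(\<lambda>\<omega>. (f \<omega> - q \<omega>) * cnj (d \<omega>) - (f \<omega> - p \<omega>) * cnj (d \<omega>))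
      = (\<lambda>\<omega>. complex_of_real ((cmod (d \<omega>))\<^sup>2))"
    unfolding complex_norm_square d_def by (auto simp: fun_eq_iff algebra_simps)
  from I0 have "integral\<^sup>L M (\<lambda>\<omega>. complex_of_real ((cmod (d \<omega>))\<^sup>2)) = 0" unfolding eq .
  then have "complex_of_real (integral\<^sup>L M (\<lambda>\<omega>. (cmod (d \<omega>))\<^sup>2)) = 0"
    by (simp only: integral_complex_of_real)
  then have z: "integral\<^sup>L M (\<lambda>\<omega>. (cmod (d \<omega>))\<^sup>2) = 0" by (simp only: of_real_eq_0_iff)
  have "integrable M (\<lambda>\<omega>. complex_of_real ((cmod (d \<omega>))\<^sup>2))"
    unfolding complex_norm_square by (rule iD)
  then have ir: "integrable M (\<lambda>\<omega>. (cmod (d \<omega>))\<^sup>2)" by (simp only: complex_of_real_integrable_eq)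
  have "AE \<omega> in M. (cmod (d \<omega>))\<^sup>2 = 0"
    using integral_nonneg_eq_0_iff_AE[OF ir] z by simp
  then have "AE \<omega> in M. p \<omega> = q \<omega>" by eventually_elim (simp add: d_def)
  then show "AE \<omega> in M. L2_proj M (poly_rv_deg X 1) f \<omega>
          = integral\<^sup>L M f + (\<Sum>k\<in>UNIV. integral\<^sup>L M (\<lambda>\<eta>. f \<eta> * complex_of_real (X k \<eta>)) * complex_of_real (X k \<omega>))"
    unfolding p_def[symmetric] q_def a0_def a_def .
qed

end


lemma delta_sum: "(\<Sum>k\<in>(UNIV::'d::finite set). (if k = j then 1 else 0) * z k) = (z j :: complex)"
proof -
  have "(\<Sum>k\<in>(UNIV::'d set). (if k = j then 1 else 0) * z k) = (\<Sum>k\<in>UNIV. if k = j then z k else 0)"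
    by (rule sum.cong) auto
  then show ?thesis by simp
qed

context mx begin

lemma one_F0: "(\<lambda>_. 1::complex) \<in> poly_rv_deg X 0"
  by (auto simp: F0_iff)

lemma deg_one: "poly_rv_degree X (\<lambda>_. 1::complex) = 0"
  unfolding poly_rv_degree_def using one_F0 by (rule Least_eq_0)

lemma x_F1: "(\<lambda>\<eta>. complex_of_real (X j \<eta>)) \<in> poly_rv_deg X 1"
proof -
  have e: "(\<lambda>\<eta>. complex_of_real (X j \<eta>)) = (\<lambda>\<eta>. 0 + (\<Sum>k\<in>UNIV. (if k = j then 1 else 0) * complex_of_real (X k \<eta>)))"
    by (simp only: delta_sum add_0_left)
  show ?thesis unfolding F1_iff
  proof (intro exI)
    show "(\<lambda>\<eta>. complex_of_real (X j \<eta>)) = (\<lambda>\<eta>. 0 + (\<Sum>k\<in>UNIV. (if k = j then 1 else 0) * complex_of_real (X k \<eta>)))" by (rule e)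
  qed
qed

lemma x_notF0: "(\<lambda>\<eta>. complex_of_real (X j \<eta>)) \<notin> poly_rv_deg X 0"
proof
  assume "(\<lambda>\<eta>. complex_of_real (X j \<eta>)) \<in> poly_rv_deg X 0"
  then obtain c where "(\<lambda>\<eta>. complex_of_real (X j \<eta>)) = (\<lambda>_. c)" by (auto simp: F0_iff)
  then have xc: "X j = (\<lambda>_. Re c)" by (metis Re_complex_of_real)
  have "integral\<^sup>L M (X j) = Re c" by (simp add: xc prob_space)
  then have "Re c = 0" using mean0 by simp
  then have "integral\<^sup>L M (\<lambda>\<omega>. X j \<omega> * X j \<omega>) = 0" by (simp add: xc)
  then show False using cov[of j j] by simp
qed

lemma deg_x: "poly_rv_degree X (\<lambda>\<eta>. complex_of_real (X j \<eta>)) = 1"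
  unfolding poly_rv_degree_def
proof (rule Least_equality)
  show "(\<lambda>\<eta>. complex_of_real (X j \<eta>)) \<in> poly_rv_deg X 1" by (rule x_F1)
next
  fix m assume "(\<lambda>\<eta>. complex_of_real (X j \<eta>)) \<in> poly_rv_deg X m"
  then show "1 \<le> m" using x_notF0 by (cases m) auto
qed

lemma U_one: "U_op M X i (\<lambda>_. 1) = (\<lambda>_. 0)"
proof -
  have p1: "L2_proj M (poly_rv_deg X 0) (\<lambda>_. 1::complex) = (\<lambda>_. 1)"
    by (subst proj0) (auto simp: prob_space)
  have p2: "L2_proj M (poly_rv_deg X 0) (\<lambda>\<eta>. complex_of_real (X i \<eta>)) = (\<lambda>_. 0)"
    using proj0[OF cint1[of i]] cmean[of i] by simp
  show ?thesis
    unfolding U_op_def a_minus_def a_zero_def deg_one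
    by (simp add: p1 p2)
qed

end


lemma delta_sum': "(\<Sum>k\<in>(UNIV::'d::finite set). (if j = k then 1 else 0) * z k) = (z j :: complex)"
proof -
  have "(\<Sum>k\<in>(UNIV::'d set). (if j = k then 1 else 0) * z k) = (\<Sum>k\<in>UNIV. if j = k then z k else 0)"
    by (rule sum.cong) auto
  then show ?thesis by simp
qed

context mx begin

lemma G0_eq: "G_comp M X 0 f = L2_proj M (poly_rv_deg X 0) f" by simp
lemma G1_eq: "G_comp M X 1 f = (\<lambda>\<omega>. L2_proj M (poly_rv_deg X 1) f \<omega> - L2_proj M (poly_rv_deg X 0) f \<omega>)"
  using G_comp.simps(2)[of M X 0 f] by simp

lemma good_xF1:
  assumes "g \<in> poly_rv_deg X 1"
  shows "good (\<lambda>\<eta>. complex_of_real (X i \<eta>) * g \<eta>)"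
proof -
  obtain c0 c where g: "g = (\<lambda>\<omega>. c0 + (\<Sum>k\<in>UNIV. c k * complex_of_real (X k \<omega>)))"
    using assms unfolding F1_iff by blast
  have m: "(\<lambda>\<eta>. complex_of_real (X i \<eta>) * g \<eta>) \<in> borel_measurable M"
    unfolding g by measurable
  have i: "integrable M (\<lambda>\<eta>. complex_of_real (X i \<eta>) * g \<eta>)"
    unfolding g by (rule lin_int(1)) (auto simp: cint1 cint2)
  have "integrable M (\<lambda>\<eta>. complex_of_real (X i \<eta>) * g \<eta> * complex_of_real (X l \<eta>))" for l
  proof -
    have "integrable M (\<lambda>\<eta>. (\<lambda>\<eta>. complex_of_real (X i \<eta>) * complex_of_real (X l \<eta>)) \<eta> * g \<eta>)"
      unfolding g by (rule lin_int(1)) (auto simp: cint2 cint3)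
    then show ?thesis by (simp add: mult_ac)
  qed
  with m i show ?thesis unfolding good_def by blast
qed

lemma U_x: "AE \<omega> in M. U_op M X i (\<lambda>\<eta>. complex_of_real (X j \<eta>)) \<omega>
   = (if i = j then 1 else 0) + 1/2 * (\<Sum>k\<in>UNIV. integral\<^sup>L M (\<lambda>\<eta>. complex_of_real (X i \<eta>) * complex_of_real (X j \<eta>) * complex_of_real (X k \<eta>)) * complex_of_real (X k \<omega>))"
proof -
  have P0j: "L2_proj M (poly_rv_deg X 0) (\<lambda>\<eta>. complex_of_real (X j \<eta>)) = (\<lambda>_. 0)"
    using proj0[OF cint1[of j]] cmean[of j] by simp
  define P where "P = L2_proj M (poly_rv_deg X 1) (\<lambda>\<eta>. complex_of_real (X j \<eta>))"
  have gx: "good (\<lambda>\<eta>. complex_of_real (X j \<eta>))" using x_F1 by (rule good_F1)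
  have P1: "P \<in> poly_rv_deg X 1" unfolding P_def using gx by (rule proj1(1))
  have "AE \<omega> in M. P \<omega> = complex_of_real (X j \<omega>)"
    using proj1(2)[OF gx] unfolding P_def[symmetric] by (simp add: mean0 ccov delta_sum')
  then have PAE: "AE \<omega> in M. complex_of_real (X i \<omega>) * P \<omega> = complex_of_real (X i \<omega>) * complex_of_real (X j \<omega>)"
    by eventually_elim simp
  have G1j: "G_comp M X 1 (\<lambda>\<eta>. complex_of_real (X j \<eta>)) = P"
    unfolding G1_eq P0j P_def by simp
  have G1j': "G_comp M X (Suc 0) (\<lambda>\<eta>. complex_of_real (X j \<eta>)) = P"
    using G1j by simp
  define f where "f = (\<lambda>\<eta>. complex_of_real (X i \<eta>) * P \<eta>)"
  have gf: "good f" unfolding f_def using P1 by (rule good_xF1)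
  have fm: "f \<in> borel_measurable M" using gf by (simp add: good_def)
  have If: "integral\<^sup>L M f = (if i = j then 1 else 0)"
  proof -
    have "integral\<^sup>L M f = integral\<^sup>L M (\<lambda>\<omega>. complex_of_real (X i \<omega>) * complex_of_real (X j \<omega>))"
      using fm PAE unfolding f_def by (intro integral_cong_AE) auto
    then show ?thesis by (simp only: ccov)
  qed
  have Ifk: "integral\<^sup>L M (\<lambda>\<eta>. f \<eta> * complex_of_real (X k \<eta>))
      = integral\<^sup>L M (\<lambda>\<eta>. complex_of_real (X i \<eta>) * complex_of_real (X j \<eta>) * complex_of_real (X k \<eta>))" for k
    using fm PAE unfolding f_def by (intro integral_cong_AE) (auto elim!: eventually_mono)
  have am: "a_minus M X i (\<lambda>\<eta>. complex_of_real (X j \<eta>)) = (\<lambda>_. if i = j then 1 else 0)"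
  proof -
    have "a_minus M X i (\<lambda>\<eta>. complex_of_real (X j \<eta>)) = G_comp M X 0 f"
      unfolding a_minus_def deg_x by (simp add: G1j G1j' f_def del: G_comp.simps)
    also have "\<dots> = (\<lambda>_. integral\<^sup>L M f)" unfolding G0_eq using gf by (intro proj0) (simp add: good_def)
    finally show ?thesis by (simp add: If)
  qed
  have z0: "L2_proj M (poly_rv_deg X 0) (\<lambda>_. 0::complex) = (\<lambda>_. 0)"
    by (subst proj0) auto
  have az0: "G_comp M X 0 (\<lambda>\<eta>. complex_of_real (X i \<eta>) * G_comp M X 0 (\<lambda>\<eta>. complex_of_real (X j \<eta>)) \<eta>) = (\<lambda>_. 0)"
    unfolding G0_eq P0j using z0 by simp
  have az1: "G_comp M X 1 f = (\<lambda>\<omega>. L2_proj M (poly_rv_deg X 1) f \<omega> - (if i = j then 1 else 0))"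
    unfolding G1_eq using proj0[of f] gf If by (simp add: good_def)
  have az: "a_zero M X i (\<lambda>\<eta>. complex_of_real (X j \<eta>)) = (\<lambda>\<omega>. L2_proj M (poly_rv_deg X 1) f \<omega> - (if i = j then 1 else 0))"
  proof -
    have "a_zero M X i (\<lambda>\<eta>. complex_of_real (X j \<eta>)) = (\<lambda>\<omega>. G_comp M X 0 (\<lambda>\<eta>. complex_of_real (X i \<eta>) * G_comp M X 0 (\<lambda>\<eta>. complex_of_real (X j \<eta>)) \<eta>) \<omega> + G_comp M X 1 f \<omega>)"
      unfolding a_zero_def deg_x by (simp add: atLeast0AtMost atMost_Suc G1j G1j' f_def add.commute del: G_comp.simps)
    then show ?thesis unfolding az0 az1 by simp
  qed
  show ?thesis
    using proj1(2)[OF gf]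
  proof eventually_elim
    case (elim \<omega>)
    show ?case unfolding U_op_def am az elim If Ifk by simp
  qed
qed

end


lemma cube_sum: "(\<Sum>i\<in>(UNIV::'d::finite set). (a i::real)) ^ 3 = (\<Sum>i\<in>UNIV. \<Sum>j\<in>UNIV. \<Sum>k\<in>UNIV. a i * a j * a k)"
proof -
  have "(\<Sum>i\<in>(UNIV::'d set). a i) ^ 3 = (\<Sum>i\<in>UNIV. a i) * (\<Sum>j\<in>UNIV. a j) * (\<Sum>k\<in>UNIV. a k)"
    by (simp add: power3_eq_cube)
  also have "\<dots> = (\<Sum>i\<in>UNIV. \<Sum>j\<in>UNIV. a i * a j) * (\<Sum>k\<in>UNIV. a k)"
    by (simp add: sum_product)
  also have "\<dots> = (\<Sum>i\<in>UNIV. \<Sum>j\<in>UNIV. (a i * a j) * (\<Sum>k\<in>UNIV. a k))"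
    by (simp only: sum_distrib_right)
  also have "\<dots> = (\<Sum>i\<in>UNIV. \<Sum>j\<in>UNIV. \<Sum>k\<in>UNIV. a i * a j * a k)"
    by (simp only: sum_distrib_left)
  finally show ?thesis .
qed

context mx begin

lemma m_real: "integral\<^sup>L M (\<lambda>\<eta>. complex_of_real (X i \<eta>) * complex_of_real (X j \<eta>) * complex_of_real (X k \<eta>))
   = complex_of_real (integral\<^sup>L M (\<lambda>\<eta>. X i \<eta> * X j \<eta> * X k \<eta>))"
proof -
  have e: "(\<lambda>\<eta>. complex_of_real (X i \<eta>) * complex_of_real (X j \<eta>) * complex_of_real (X k \<eta>))
     = (\<lambda>\<eta>. complex_of_real (X i \<eta> * X j \<eta> * X k \<eta>))" by simp
  show ?thesis unfolding e by (rule integral_complex_of_real)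
qed

lemma alpha_eq:
  assumes mx: "one_Meixner_coeffs M X \<alpha> \<beta>" and nd: "non_degenerate M X"
  shows "\<alpha> i j k = 1/2 * integral\<^sup>L M (\<lambda>\<eta>. X i \<eta> * X j \<eta> * X k \<eta>)"
proof -
  define m where "m k = integral\<^sup>L M (\<lambda>\<eta>. complex_of_real (X i \<eta>) * complex_of_real (X j \<eta>) * complex_of_real (X k \<eta>))" for k
  have one: "(\<lambda>_. 1::complex) \<in> poly_rv X" unfolding poly_rv_def using one_F0 by blast
  have "\<forall>i j. \<forall>f\<in>poly_rv X. AE \<omega> in M.
      U_op M X i (\<lambda>\<eta>. complex_of_real (X j \<eta>) * f \<eta>) \<omega> - complex_of_real (X j \<omega>) * U_op M X i f \<omega>
      = (\<Sum>k\<in>UNIV. complex_of_real (\<alpha> i j k) * complex_of_real (X k \<omega>) * f \<omega>)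
        + complex_of_real (\<beta> i j) * f \<omega>"
    using mx unfolding one_Meixner_coeffs_def .
  note H = bspec[OF spec[OF spec[OF this, of i], of j] one]
  from H have A1: "AE \<omega> in M. U_op M X i (\<lambda>\<eta>. complex_of_real (X j \<eta>)) \<omega>
      = (\<Sum>k\<in>UNIV. complex_of_real (\<alpha> i j k) * complex_of_real (X k \<omega>)) + complex_of_real (\<beta> i j)"
    by (simp add: U_one)
  define c0 where "c0 = (if i = j then 1 else 0) - complex_of_real (\<beta> i j)"
  define c where "c k = 1/2 * m k - complex_of_real (\<alpha> i j k)" for k
  have A2: "AE \<omega> in M. c0 + (\<Sum>k\<in>UNIV. c k * complex_of_real (X k \<omega>)) = 0"
    using A1 U_x[of i j]
  proof eventually_elim
    case (elim \<omega>)
    have "c0 + (\<Sum>k\<in>UNIV. c k * complex_of_real (X k \<omega>))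
      = ((if i = j then 1 else 0) + 1/2 * (\<Sum>k\<in>UNIV. m k * complex_of_real (X k \<omega>)))
        - ((\<Sum>k\<in>UNIV. complex_of_real (\<alpha> i j k) * complex_of_real (X k \<omega>)) + complex_of_real (\<beta> i j))"
    proof -
      have "(\<Sum>k\<in>UNIV. c k * complex_of_real (X k \<omega>))
         = (\<Sum>k\<in>UNIV. 1/2 * (m k * complex_of_real (X k \<omega>)) - complex_of_real (\<alpha> i j k) * complex_of_real (X k \<omega>))"
        by (rule sum.cong) (simp_all add: c_def algebra_simps)
      also have "\<dots> = 1/2 * (\<Sum>k\<in>UNIV. m k * complex_of_real (X k \<omega>)) - (\<Sum>k\<in>UNIV. complex_of_real (\<alpha> i j k) * complex_of_real (X k \<omega>))"
        by (simp only: sum_subtractf sum_distrib_left)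
      finally show ?thesis by (simp add: c0_def)
    qed
    also have "\<dots> = 0" using elim by (simp add: m_def)
    finally show ?case .
  qed
  have "\<forall>f\<in>poly_rv X. AE \<omega> in M. c0 * f \<omega> + (\<Sum>k\<in>UNIV. c k * complex_of_real (X k \<omega>) * f \<omega>) = 0"
  proof
    fix f assume "f \<in> poly_rv X"
    show "AE \<omega> in M. c0 * f \<omega> + (\<Sum>k\<in>UNIV. c k * complex_of_real (X k \<omega>) * f \<omega>) = 0"
      using A2
    proof eventually_elim
      case (elim \<omega>)
      have "c0 * f \<omega> + (\<Sum>k\<in>UNIV. c k * complex_of_real (X k \<omega>) * f \<omega>)
          = (c0 + (\<Sum>k\<in>UNIV. c k * complex_of_real (X k \<omega>))) * f \<omega>"
        by (simp add: distrib_right sum_distrib_right)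
      then show ?case using elim by simp
    qed
  qed
  then have "c k = 0" using nd unfolding non_degenerate_def by blast
  then have "complex_of_real (\<alpha> i j k) = 1/2 * complex_of_real (integral\<^sup>L M (\<lambda>\<eta>. X i \<eta> * X j \<eta> * X k \<eta>))"
    by (simp add: c_def m_def m_real)
  then have "complex_of_real (\<alpha> i j k) = complex_of_real (1/2 * integral\<^sup>L M (\<lambda>\<eta>. X i \<eta> * X j \<eta> * X k \<eta>))"
    by simp
  then show ?thesis by (simp only: of_real_eq_iff)
qed

end

theorem mainTheorem10:
  fixes M :: "'a measure" and X :: "'d::finite \<Rightarrow> 'a \<Rightarrow> real"
    and \<alpha> :: "'d \<Rightarrow> 'd \<Rightarrow> 'd \<Rightarrow> real" and \<beta> :: "'d \<Rightarrow> 'd \<Rightarrow> real"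
    and t :: "'d \<Rightarrow> real"
  assumes "prob_space M"
    and "finite_moments M X"
    and "one_Meixner_coeffs M X \<alpha> \<beta>"
    and "non_degenerate M X"
    and "\<And>k. integral\<^sup>L M (X k) = 0"
    and "\<And>i j. integral\<^sup>L M (\<lambda>\<omega>. X i \<omega> * X j \<omega>) = (if i = j then 1 else 0)"
  shows "(\<Sum>i\<in>UNIV. \<Sum>j\<in>UNIV. \<Sum>k\<in>UNIV. \<alpha> i j k * t i * t j * t k)
         = 1/2 * integral\<^sup>L M (\<lambda>\<omega>. (\<Sum>i\<in>UNIV. t i * X i \<omega>) ^ 3)"
proof -
  have mxi: "mx M X"
    unfolding mx_def mx_axioms_def using assms(1,2,5,6) by blast
  interpret mx M X by (rule mxi)
  have al: "\<alpha> i j k = 1/2 * integral\<^sup>L M (\<lambda>\<eta>. X i \<eta> * X j \<eta> * X k \<eta>)" for i j k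
    using alpha_eq[OF assms(3,4)] .
  have ii: "integrable M (\<lambda>\<omega>. t i * t j * t k * (X i \<omega> * X j \<omega> * X k \<omega>))" for i j k
    using int3[of i j k] by (rule integrable_mult_right)
  define I where "I i j k = integral\<^sup>L M (\<lambda>\<omega>. X i \<omega> * X j \<omega> * X k \<omega>)" for i j k
  have cube: "(\<lambda>\<omega>. (\<Sum>i\<in>UNIV. t i * X i \<omega>) ^ 3)
      = (\<lambda>\<omega>. \<Sum>i\<in>UNIV. \<Sum>j\<in>UNIV. \<Sum>k\<in>UNIV. t i * t j * t k * (X i \<omega> * X j \<omega> * X k \<omega>))"
    by (rule ext) (simp only: cube_sum mult_ac)
  have "integral\<^sup>L M (\<lambda>\<omega>. (\<Sum>i\<in>UNIV. t i * X i \<omega>) ^ 3)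
      = (\<Sum>i\<in>UNIV. \<Sum>j\<in>UNIV. \<Sum>k\<in>UNIV. integral\<^sup>L M (\<lambda>\<omega>. t i * t j * t k * (X i \<omega> * X j \<omega> * X k \<omega>)))"
    unfolding cube using ii
    by (simp only: Bochner_Integration.integral_sum Bochner_Integration.integrable_sum)
  also have "\<dots> = (\<Sum>i\<in>UNIV. \<Sum>j\<in>UNIV. \<Sum>k\<in>UNIV. t i * t j * t k * I i j k)"
    by (simp only: integral_mult_right_zero I_def)
  finally have R: "integral\<^sup>L M (\<lambda>\<omega>. (\<Sum>i\<in>UNIV. t i * X i \<omega>) ^ 3)
      = (\<Sum>i\<in>UNIV. \<Sum>j\<in>UNIV. \<Sum>k\<in>UNIV. t i * t j * t k * I i j k)" .
  have "(\<Sum>i\<in>UNIV. \<Sum>j\<in>UNIV. \<Sum>k\<in>UNIV. \<alpha> i j k * t i * t j * t k)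
      = (\<Sum>i\<in>UNIV. \<Sum>j\<in>UNIV. \<Sum>k\<in>UNIV. 1/2 * (t i * t j * t k * I i j k))"
    by (intro sum.cong refl) (simp add: al I_def)
  also have "\<dots> = 1/2 * (\<Sum>i\<in>UNIV. \<Sum>j\<in>UNIV. \<Sum>k\<in>UNIV. t i * t j * t k * I i j k)"
    by (simp only: sum_distrib_left)
  finally show ?thesis unfolding R .
qed


end
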